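(* Let $1\ge a>0$. (a) The memory-one strategy $\mathbf p=a\,(1,0,1,0)+(1-a)(1,1,0,0)$ (a mixture of Tit-for-Tat and Repeat) is good, and for every strategy pattern of Y and every associated limit distribution the expected payoffs satisfy $s_Y=s_X$. (b) The memory-one strategy $\mathbf p=a\,(1,0,0,0)+(1-a)(1,1,0,0)$ (a mixture of Grim and Repeat) is good.
   Context: Iterated Prisoner's Dilemma: payoffs $T>R>P>S$ with $2R>T+S$; outcomes of a round are ordered $cc,cd,dc,dd$ (first letter X's play, second Y's; $c$ = cooperate, $d$ = defect); payoff vectors $\mathbf S_X=(R,S,T,P)$, $\mathbf S_Y=(R,T,S,P)$. A memory-one strategy for X is $\mathbf p=(p_1,p_2,p_3,p_4)\in[0,1]^4$, where $p_i$ is the probability that X plays $c$ in the next round given that the current round had the $i$-th outcome. A strategy pattern for Y is an arbitrary (possibly randomized and history-dependent) rule for Y's play in each round. Given initial plays and the rules used, let $\mathbf v^n$ be the probability distribution of the outcome of round $n$; a limit distribution is any limit point $\mathbf v$ of the Cesàro averages $\frac1n\sum_{k=1}^n\mathbf v^k$, and the associated expected payoffs are $s_X=\langle\mathbf v\cdot\mathbf S_X\rangle$, $s_Y=\langle\mathbf v\cdot\mathbf S_Y\rangle$. $\mathbf p$ is agreeable if $p_1=1$. $\mathbf p$ is good if it is agreeable and, for every strategy pattern of Y and every associated limit distribution, $s_Y\ge R$ implies $s_Y=s_X=R$. *)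

theory Defs
  imports Complex_Main
begin

text \<open>Outcomes of a round: (X plays c, Y plays c).  So cc = (True,True), cd = (True,False),
  dc = (False,True), dd = (False,False).\<close>
type_synonym outcome = "bool \<times> bool"

definition memory_one :: "real \<Rightarrow> real \<Rightarrow> real \<Rightarrow> real \<Rightarrow> outcome \<Rightarrow> real" where
  "memory_one p1 p2 p3 p4 = (\<lambda>(x, y). if x then (if y then p1 else p2) else (if y then p3 else p4))"

text \<open>A strategy pattern for Y (behaviour strategy): probability that Y cooperates in the next
  round given the whole history so far (chronological list of outcomes).\<close>
definition play_prob :: "(outcome \<Rightarrow> real) \<Rightarrow> real \<Rightarrow> (outcome list \<Rightarrow> real) \<Rightarrow> outcome list \<Rightarrow> outcome \<Rightarrow> real" where
  "play_prob p x0 q h w =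
     (let px = (if h = [] then x0 else p (last h)); py = q h
      in (if fst w then px else 1 - px) * (if snd w then py else 1 - py))"

definition hist_prob :: "(outcome \<Rightarrow> real) \<Rightarrow> real \<Rightarrow> (outcome list \<Rightarrow> real) \<Rightarrow> outcome list \<Rightarrow> real" where
  "hist_prob p x0 q h = (\<Prod>i<length h. play_prob p x0 q (take i h) (h ! i))"

text \<open>Distribution v^n of the outcome of round n (n \<ge> 1).\<close>
definition round_dist :: "(outcome \<Rightarrow> real) \<Rightarrow> real \<Rightarrow> (outcome list \<Rightarrow> real) \<Rightarrow> nat \<Rightarrow> outcome \<Rightarrow> real" where
  "round_dist p x0 q n w = (\<Sum>h\<in>{h. length h = n \<and> h \<noteq> [] \<and> last h = w}. hist_prob p x0 q h)"

definition cesaro :: "(outcome \<Rightarrow> real) \<Rightarrow> real \<Rightarrow> (outcome list \<Rightarrow> real) \<Rightarrow> nat \<Rightarrow> outcome \<Rightarrow> real" where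
  "cesaro p x0 q n w = (\<Sum>k=1..n. round_dist p x0 q k w) / real n"

definition limit_dist :: "(outcome \<Rightarrow> real) \<Rightarrow> real \<Rightarrow> (outcome list \<Rightarrow> real) \<Rightarrow> (outcome \<Rightarrow> real) \<Rightarrow> bool" where
  "limit_dist p x0 q v \<longleftrightarrow>
     (\<exists>r. strict_mono r \<and> (\<forall>w. (\<lambda>n. cesaro p x0 q (r n) w) \<longlonglongrightarrow> v w))"

definition payoff_X :: "real \<Rightarrow> real \<Rightarrow> real \<Rightarrow> real \<Rightarrow> (outcome \<Rightarrow> real) \<Rightarrow> real" where
  "payoff_X R S T P v = v (True, True) * R + v (True, False) * S + v (False, True) * T + v (False, False) * P"

definition payoff_Y :: "real \<Rightarrow> real \<Rightarrow> real \<Rightarrow> real \<Rightarrow> (outcome \<Rightarrow> real) \<Rightarrow> real" where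
  "payoff_Y R S T P v = v (True, True) * R + v (True, False) * T + v (False, True) * S + v (False, False) * P"

definition valid_pattern :: "(outcome list \<Rightarrow> real) \<Rightarrow> bool" where
  "valid_pattern q \<longleftrightarrow> (\<forall>h. 0 \<le> q h \<and> q h \<le> 1)"

definition agreeable :: "(outcome \<Rightarrow> real) \<Rightarrow> bool" where
  "agreeable p \<longleftrightarrow> p (True, True) = 1"

definition good :: "real \<Rightarrow> real \<Rightarrow> real \<Rightarrow> real \<Rightarrow> (outcome \<Rightarrow> real) \<Rightarrow> bool" where
  "good R S T P p \<longleftrightarrow> agreeable p \<and>
     (\<forall>x0 q v. 0 \<le> x0 \<and> x0 \<le> 1 \<and> valid_pattern q \<and> limit_dist p x0 q v \<longrightarrow>
        (payoff_Y R S T P v \<ge> R \<longrightarrow> payoff_Y R S T P v = R \<and> payoff_X R S T P v = R))"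

end

theory Submission
  imports Defs
begin

lemma sum_UNIV_outcome:
  "(\<Sum>w\<in>(UNIV::outcome set). f w) = f (True,True) + f (True,False) + f (False,True) + f (False,False)"
proof -
  have e: "(UNIV::outcome set) = {(True,True),(True,False),(False,True),(False,False)}" by auto
  show ?thesis by (subst e) (simp add: add.assoc)
qed

lemma fin_len: "finite {h::outcome list. length h = n}"
  using finite_lists_length_eq[of "UNIV::outcome set" n] by simp

lemma sum_len_Suc:
  "(\<Sum>h\<in>{h::outcome list. length h = Suc n}. g h) = (\<Sum>h\<in>{h. length h = n}. \<Sum>w\<in>UNIV. g (h @ [w]))"
proof -
  have e: "{h::outcome list. length h = Suc n} = (\<lambda>(h,w). h @ [w]) ` ({h. length h = n} \<times> UNIV)"
  proof (rule set_eqI, rule iffI)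
    fix x :: "outcome list" assume "x \<in> {h. length h = Suc n}"
    then have "x \<noteq> []" "length (butlast x) = n" by auto
    then show "x \<in> (\<lambda>(h,w). h @ [w]) ` ({h. length h = n} \<times> UNIV)"
      by (intro image_eqI[of _ _ "(butlast x, last x)"]) auto
  qed auto
  have inj: "inj_on (\<lambda>(h,w). h @ [w]) ({h::outcome list. length h = n} \<times> UNIV)"
    by (auto simp: inj_on_def)
  show ?thesis
    unfolding e sum.reindex[OF inj] sum.cartesian_product by (simp add: o_def case_prod_beta)
qed

lemma hp_snoc: "hist_prob p x0 q (h @ [w]) = hist_prob p x0 q h * play_prob p x0 q h w"
proof -
  have "(\<Prod>i<length h. play_prob p x0 q (take i (h @ [w])) ((h @ [w]) ! i))
       = (\<Prod>i<length h. play_prob p x0 q (take i h) (h ! i))"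
    by (rule prod.cong) (auto simp: nth_append)
  then show ?thesis unfolding hist_prob_def by (simp add: nth_append)
qed

lemma pp_sum: "(\<Sum>w\<in>UNIV. play_prob p x0 q h w) = 1"
  unfolding sum_UNIV_outcome play_prob_def Let_def by (simp add: algebra_simps)

lemma pp_T: "play_prob p x0 q h (True,True) + play_prob p x0 q h (True,False) = (if h = [] then x0 else p (last h))"
  unfolding play_prob_def Let_def by (simp add: algebra_simps)

lemma mass: "(\<Sum>h\<in>{h::outcome list. length h = n}. hist_prob p x0 q h) = 1"
proof (induction n)
  case 0
  have "{h::outcome list. length h = 0} = {[]}" by auto
  then show ?case by (simp add: hist_prob_def)
next
  case (Suc n)
  then show ?case
    by (simp add: sum_len_Suc hp_snoc sum_distrib_left[symmetric] pp_sum)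
qed

lemma rd_Suc: "round_dist p x0 q (Suc n) w = (\<Sum>h\<in>{h::outcome list. length h = n}. hist_prob p x0 q h * play_prob p x0 q h w)"
proof -
  have "{h::outcome list. length h = Suc n \<and> h \<noteq> [] \<and> last h = w} = {h \<in> {h. length h = Suc n}. last h = w}"
    by auto
  then have "round_dist p x0 q (Suc n) w = (\<Sum>h\<in>{h::outcome list. length h = Suc n}. if last h = w then hist_prob p x0 q h else 0)"
    unfolding round_dist_def using sum.inter_filter[OF fin_len] by simp
  also have "\<dots> = (\<Sum>h\<in>{h::outcome list. length h = n}. \<Sum>w'\<in>UNIV. if w' = w then hist_prob p x0 q (h @ [w']) else 0)"
    by (simp add: sum_len_Suc)
  also have "\<dots> = (\<Sum>h\<in>{h::outcome list. length h = n}. hist_prob p x0 q h * play_prob p x0 q h w)"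
    by (simp add: hp_snoc)
  finally show ?thesis .
qed

lemma rd_sum: "(\<Sum>w\<in>UNIV. round_dist p x0 q (Suc n) w) = 1"
  unfolding rd_Suc by (subst sum.swap) (simp add: sum_distrib_left[symmetric] pp_sum mass)

lemma key: "round_dist p x0 q (Suc (Suc m)) (True,True) + round_dist p x0 q (Suc (Suc m)) (True,False)
   = (\<Sum>w\<in>UNIV. p w * round_dist p x0 q (Suc m) w)"
proof -
  have "round_dist p x0 q (Suc (Suc m)) (True,True) + round_dist p x0 q (Suc (Suc m)) (True,False)
     = (\<Sum>h\<in>{h::outcome list. length h = Suc m}. hist_prob p x0 q h * p (last h))"
    unfolding rd_Suc sum.distrib[symmetric] distrib_left[symmetric]
    by (rule sum.cong) (auto simp: pp_T)
  also have "\<dots> = (\<Sum>h\<in>{h::outcome list. length h = m}. \<Sum>w\<in>UNIV. p w * (hist_prob p x0 q h * play_prob p x0 q h w))"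
    by (simp add: sum_len_Suc hp_snoc mult_ac)
  also have "\<dots> = (\<Sum>w\<in>UNIV. p w * round_dist p x0 q (Suc m) w)"
    unfolding rd_Suc by (subst sum.swap) (simp add: sum_distrib_left)
  finally show ?thesis .
qed

definition coopX :: "(outcome \<Rightarrow> real) \<Rightarrow> real \<Rightarrow> (outcome list \<Rightarrow> real) \<Rightarrow> nat \<Rightarrow> real" where
  "coopX p x0 q k = round_dist p x0 q k (True,True) + round_dist p x0 q k (True,False)"

lemma G_eq: "(\<Sum>w\<in>UNIV. cesaro p x0 q n w * p w) - (cesaro p x0 q n (True,True) + cesaro p x0 q n (True,False))
  = (coopX p x0 q (Suc n) - coopX p x0 q 1) / real n"
proof -
  have 1: "(\<Sum>w\<in>UNIV. cesaro p x0 q n w * p w) = (\<Sum>k=1..n. \<Sum>w\<in>UNIV. p w * round_dist p x0 q k w) / real n"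
  proof -
    have "(\<Sum>w\<in>UNIV. cesaro p x0 q n w * p w) = (\<Sum>w\<in>UNIV. p w * (\<Sum>k=1..n. round_dist p x0 q k w)) / real n"
      unfolding cesaro_def by (subst sum_divide_distrib) (rule sum.cong, simp_all)
    also have "\<dots> = (\<Sum>w\<in>UNIV. \<Sum>k=1..n. p w * round_dist p x0 q k w) / real n"
      by (simp add: sum_distrib_left)
    also have "\<dots> = (\<Sum>k=1..n. \<Sum>w\<in>UNIV. p w * round_dist p x0 q k w) / real n"
      by (subst sum.swap) simp
    finally show ?thesis .
  qed
  have 2: "(\<Sum>k=1..n. \<Sum>w\<in>UNIV. p w * round_dist p x0 q k w) = (\<Sum>k=1..n. coopX p x0 q (Suc k))"
  proof (rule sum.cong)
    fix k assume "k \<in> {1..n}"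
    then obtain m where "k = Suc m" by (cases k) auto
    then show "(\<Sum>w\<in>UNIV. p w * round_dist p x0 q k w) = coopX p x0 q (Suc k)"
      by (simp add: coopX_def key)
  qed simp
  have 3: "cesaro p x0 q n (True,True) + cesaro p x0 q n (True,False) = (\<Sum>k=1..n. coopX p x0 q k) / real n"
    unfolding cesaro_def coopX_def by (simp add: sum.distrib add_divide_distrib)
  have 4: "(\<Sum>k=1..n. coopX p x0 q (Suc k)) - (\<Sum>k=1..n. coopX p x0 q k) = coopX p x0 q (Suc n) - coopX p x0 q 1"
    using sum_Suc_diff[of 1 n "coopX p x0 q"] by (simp add: sum_subtractf)
  show ?thesis unfolding 1 2 3 4[symmetric] by (simp add: diff_divide_distrib)
qed

lemma pp_nonneg: assumes "\<forall>w. 0 \<le> p w \<and> p w \<le> 1" "0 \<le> x0" "x0 \<le> 1" "valid_pattern q"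
  shows "0 \<le> play_prob p x0 q h w"
  using assms assms(1)[rule_format, of "last h"] unfolding play_prob_def valid_pattern_def Let_def
  by (auto intro!: mult_nonneg_nonneg)

lemma rd_nonneg: assumes "\<forall>w. 0 \<le> p w \<and> p w \<le> 1" "0 \<le> x0" "x0 \<le> 1" "valid_pattern q"
  shows "0 \<le> round_dist p x0 q n w"
  unfolding round_dist_def hist_prob_def
  by (intro sum_nonneg prod_nonneg pp_nonneg[OF assms])

lemma coop_bound: assumes "\<forall>w. 0 \<le> p w \<and> p w \<le> 1" "0 \<le> x0" "x0 \<le> 1" "valid_pattern q"
  shows "0 \<le> coopX p x0 q (Suc n) \<and> coopX p x0 q (Suc n) \<le> 1"
  using rd_sum[of p x0 q n] rd_nonneg[OF assms, of "Suc n"]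
  unfolding coopX_def sum_UNIV_outcome
  by (smt (verit))

lemma cesaro_sum: "1 \<le> m \<Longrightarrow> (\<Sum>w\<in>UNIV. cesaro p x0 q m w) = 1"
proof -
  assume m: "1 \<le> m"
  have "(\<Sum>w\<in>UNIV. cesaro p x0 q m w) = (\<Sum>k=1..m. \<Sum>w\<in>UNIV. round_dist p x0 q k w) / real m"
    unfolding cesaro_def by (subst sum.swap) (simp add: sum_divide_distrib)
  also have "(\<Sum>k=1..m. \<Sum>w\<in>UNIV. round_dist p x0 q k w) = (\<Sum>k=1..m. 1)"
  proof (rule sum.cong)
    fix k assume "k \<in> {1..m}"
    then obtain j where "k = Suc j" by (cases k) auto
    then show "(\<Sum>w\<in>UNIV. round_dist p x0 q k w) = 1" by (simp add: rd_sum)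
  qed simp
  finally show ?thesis using m by simp
qed

lemma limit_props:
  assumes A: "\<forall>w. 0 \<le> p w \<and> p w \<le> 1" "0 \<le> x0" "x0 \<le> 1" "valid_pattern q"
    and L: "limit_dist p x0 q v"
  shows "(\<forall>w. 0 \<le> v w) \<and> (\<Sum>w\<in>UNIV. v w) = 1
     \<and> (\<Sum>w\<in>UNIV. v w * p w) = v (True,True) + v (True,False)"
proof -
  obtain r where r: "strict_mono r" and lim: "\<And>w. (\<lambda>n. cesaro p x0 q (r n) w) \<longlonglongrightarrow> v w"
    using L unfolding limit_dist_def by blast
  have cnn: "0 \<le> cesaro p x0 q m w" for m w
    unfolding cesaro_def by (intro divide_nonneg_nonneg sum_nonneg rd_nonneg[OF A]) auto
  have nn: "0 \<le> v w" for w
    by (rule LIMSEQ_le_const[OF lim]) (use cnn in auto)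
  have s1: "(\<lambda>n. \<Sum>w\<in>UNIV. cesaro p x0 q (r n) w) \<longlonglongrightarrow> (\<Sum>w\<in>UNIV. v w)"
    by (intro tendsto_sum lim)
  have "eventually (\<lambda>n. (\<Sum>w\<in>UNIV. cesaro p x0 q (r n) w) = 1) sequentially"
  proof (rule eventually_sequentiallyI[of 1])
    fix n :: nat assume "1 \<le> n"
    then have "1 \<le> r n" using seq_suble[OF r, of n] by simp
    then show "(\<Sum>w\<in>UNIV. cesaro p x0 q (r n) w) = 1" by (rule cesaro_sum)
  qed
  then have s2: "(\<lambda>n. \<Sum>w\<in>UNIV. cesaro p x0 q (r n) w) \<longlonglongrightarrow> 1"
    by (rule tendsto_eventually)
  have sum1: "(\<Sum>w\<in>UNIV. v w) = 1" using LIMSEQ_unique[OF s1 s2] .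
  define G where "G m = (\<Sum>w\<in>UNIV. cesaro p x0 q m w * p w) - (cesaro p x0 q m (True,True) + cesaro p x0 q m (True,False))" for m
  have g1: "(\<lambda>n. G (r n)) \<longlonglongrightarrow> (\<Sum>w\<in>UNIV. v w * p w) - (v (True,True) + v (True,False))"
    unfolding G_def by (intro tendsto_intros lim)
  have bnd: "\<bar>G m\<bar> \<le> 1 / real m" for m
  proof -
    have "\<bar>coopX p x0 q (Suc m) - coopX p x0 q 1\<bar> \<le> 1"
      using coop_bound[OF A, of m] coop_bound[OF A, of 0] by (simp add: abs_le_iff)
    then show ?thesis unfolding G_def G_eq abs_divide
      by (cases "m = 0") (auto simp: divide_right_mono)
  qed
  have inv0: "(\<lambda>n. 1 / real (r n)) \<longlonglongrightarrow> 0"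
    using LIMSEQ_subseq_LIMSEQ[OF lim_1_over_n r] by (simp add: o_def)
  have minv0: "(\<lambda>n. - (1 / real (r n))) \<longlonglongrightarrow> 0"
    using tendsto_minus[OF inv0] by simp
  have g2: "(\<lambda>n. G (r n)) \<longlonglongrightarrow> 0"
  proof (rule tendsto_sandwich[OF _ _ minv0 inv0])
    show "\<forall>\<^sub>F n in sequentially. - (1 / real (r n)) \<le> G (r n)"
      using bnd by (intro always_eventually allI) (metis abs_le_iff minus_le_iff)
    show "\<forall>\<^sub>F n in sequentially. G (r n) \<le> 1 / real (r n)"
      using bnd by (intro always_eventually allI) (metis abs_le_iff)
  qed
  have "(\<Sum>w\<in>UNIV. v w * p w) - (v (True,True) + v (True,False)) = 0"
    using LIMSEQ_unique[OF g1 g2] .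
  then show ?thesis using nn sum1 by simp
qed

lemma nonneg_pair_zero:
  fixes x y c d :: real
  assumes "0 \<le> x" "0 \<le> y" "0 < c" "0 < d" "x * c + y * d \<le> 0"
  shows "x = 0 \<and> y = 0"
proof -
  have "0 \<le> x * c" "0 \<le> y * d" using assms by auto
  then have "x * c = 0" "y * d = 0" using assms(5) by linarith+
  then show ?thesis using assms(3,4) by auto
qed

lemma mem_simps:
  "memory_one a b c d (True,True) = a" "memory_one a b c d (True,False) = b"
  "memory_one a b c d (False,True) = c" "memory_one a b c d (False,False) = d"
  by (simp_all add: memory_one_def)

theorem corollary1p4:
  fixes R S T P a :: real
  assumes "T > R" and "R > P" and "P > S" and "2 * R > T + S"
    and "0 < a" and "a \<le> 1"
  shows "good R S T P (memory_one 1 (1 - a) a 0)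
       \<and> (\<forall>x0 q v. 0 \<le> x0 \<and> x0 \<le> 1 \<and> valid_pattern q \<and> limit_dist (memory_one 1 (1 - a) a 0) x0 q v
              \<longrightarrow> payoff_Y R S T P v = payoff_X R S T P v)
       \<and> good R S T P (memory_one 1 (1 - a) 0 0)"
proof -
  have p1: "\<forall>w. 0 \<le> memory_one 1 (1 - a) a 0 w \<and> memory_one 1 (1 - a) a 0 w \<le> 1"
    using assms(5,6) by (auto simp: memory_one_def)
  have p2: "\<forall>w. 0 \<le> memory_one 1 (1 - a) 0 0 w \<and> memory_one 1 (1 - a) 0 0 w \<le> 1"
    using assms(5,6) by (auto simp: memory_one_def)
  have A: "v (False,True) = v (True,False) \<and> 0 \<le> v (True,True) \<and> 0 \<le> v (True,False) \<and> 0 \<le> v (False,False)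
      \<and> v (True,True) + v (True,False) + v (False,True) + v (False,False) = 1"
    if "0 \<le> x0 \<and> x0 \<le> 1 \<and> valid_pattern q \<and> limit_dist (memory_one 1 (1 - a) a 0) x0 q v" for x0 q v
  proof -
    have L: "(\<forall>w. 0 \<le> v w) \<and> (\<Sum>w\<in>UNIV. v w) = 1
     \<and> (\<Sum>w\<in>UNIV. v w * memory_one 1 (1 - a) a 0 w) = v (True,True) + v (True,False)"
      using limit_props[OF p1, of x0 q v] that by blast
    then have "a * (v (False,True) - v (True,False)) = 0"
      unfolding sum_UNIV_outcome mem_simps by (simp add: algebra_simps)
    then show ?thesis using L assms(5) unfolding sum_UNIV_outcome by auto
  qed
  have B: "v (True,False) = 0 \<and> 0 \<le> v (True,True) \<and> 0 \<le> v (False,True) \<and> 0 \<le> v (False,False)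
      \<and> v (True,True) + v (True,False) + v (False,True) + v (False,False) = 1"
    if "0 \<le> x0 \<and> x0 \<le> 1 \<and> valid_pattern q \<and> limit_dist (memory_one 1 (1 - a) 0 0) x0 q v" for x0 q v
  proof -
    have L: "(\<forall>w. 0 \<le> v w) \<and> (\<Sum>w\<in>UNIV. v w) = 1
     \<and> (\<Sum>w\<in>UNIV. v w * memory_one 1 (1 - a) 0 0 w) = v (True,True) + v (True,False)"
      using limit_props[OF p2, of x0 q v] that by blast
    then have "a * v (True,False) = 0"
      unfolding sum_UNIV_outcome mem_simps by (simp add: algebra_simps)
    then show ?thesis using L assms(5) unfolding sum_UNIV_outcome by auto
  qed
  have G1: "good R S T P (memory_one 1 (1 - a) a 0)"
    unfolding good_def agreeable_def
  proof (intro conjI allI impI)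
    show "memory_one 1 (1 - a) a 0 (True, True) = 1" by (simp add: mem_simps)
    fix x0 q v
    assume h: "0 \<le> x0 \<and> x0 \<le> 1 \<and> valid_pattern q \<and> limit_dist (memory_one 1 (1 - a) a 0) x0 q v"
      and y: "R \<le> payoff_Y R S T P v"
    note a = A[OF h]
    have r: "R = (v (True,True) + v (True,False) + v (False,True) + v (False,False)) * R"
      using a by simp
    have "v (True,False) * (2*R - T - S) + v (False,False) * (R - P) \<le> 0"
      using y r unfolding payoff_Y_def a[THEN conjunct1] by (simp add: algebra_simps)
    then have z: "v (True,False) = 0 \<and> v (False,False) = 0"
      using nonneg_pair_zero[of "v (True,False)" "v (False,False)" "2*R - T - S" "R - P"] a assms by auto
    then have "v (True,True) = 1" using a by simp
    then show "payoff_Y R S T P v = R" "payoff_X R S T P v = R"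
      using z a unfolding payoff_Y_def payoff_X_def by simp_all
  qed
  have G2: "good R S T P (memory_one 1 (1 - a) 0 0)"
    unfolding good_def agreeable_def
  proof (intro conjI allI impI)
    show "memory_one 1 (1 - a) 0 0 (True, True) = 1" by (simp add: mem_simps)
    fix x0 q v
    assume h: "0 \<le> x0 \<and> x0 \<le> 1 \<and> valid_pattern q \<and> limit_dist (memory_one 1 (1 - a) 0 0) x0 q v"
      and y: "R \<le> payoff_Y R S T P v"
    note b = B[OF h]
    have r: "R = (v (True,True) + v (True,False) + v (False,True) + v (False,False)) * R"
      using b by simp
    have "v (False,True) * (R - S) + v (False,False) * (R - P) \<le> 0"
      using y r unfolding payoff_Y_def b[THEN conjunct1] by (simp add: algebra_simps)
    then have z: "v (False,True) = 0 \<and> v (False,False) = 0"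
      using nonneg_pair_zero[of "v (False,True)" "v (False,False)" "R - S" "R - P"] b assms by auto
    then have "v (True,True) = 1" using b by simp
    then show "payoff_Y R S T P v = R" "payoff_X R S T P v = R"
      using z b unfolding payoff_Y_def payoff_X_def by simp_all
  qed
  have E: "\<forall>x0 q v. 0 \<le> x0 \<and> x0 \<le> 1 \<and> valid_pattern q \<and> limit_dist (memory_one 1 (1 - a) a 0) x0 q v
              \<longrightarrow> payoff_Y R S T P v = payoff_X R S T P v"
  proof (intro allI impI)
    fix x0 q v assume h: "0 \<le> x0 \<and> x0 \<le> 1 \<and> valid_pattern q \<and> limit_dist (memory_one 1 (1 - a) a 0) x0 q v"
    show "payoff_Y R S T P v = payoff_X R S T P v"
      using A[OF h] unfolding payoff_Y_def payoff_X_def by simp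
  qed
  show ?thesis using G1 G2 E by blast
qed

end
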